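(* Let $\mathfrak f_3$ be the Lie algebra with basis $e_1,e_2,e_3,\alpha,\beta,\gamma$, brackets $[e_1,e_2]=\alpha$, $[e_2,e_3]=\beta$, $[e_3,e_1]=\gamma$, and $\alpha,\beta,\gamma$ central; let $\mathfrak z=\mathrm{span}(\alpha,\beta,\gamma)$. Consider linear maps $\delta:\mathfrak f_3\to\Lambda^2\mathfrak f_3$ with $\delta(\mathfrak z)=0$ and $\delta(e_i)=e_i\wedge A_i+\omega_i$ ($i=1,2,3$) for some $A_i\in\mathfrak z$, $\omega_i\in\Lambda^2\mathfrak z$. Such a $\delta$ is a Lie bialgebra structure if and only if there exist $a,b,c\in k$ with $A_1=a\alpha+b\beta+c\gamma$, $A_2=a\alpha-b\beta-c\gamma$, $A_3=-a\alpha-b\beta+c\gamma$, and $\omega_i\wedge A_i=0$ in $\Lambda^3\mathfrak z$ for $i=1,2,3$.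
   Context: The field $k$ has characteristic zero. A Lie bialgebra structure is a linear $\delta:\mathfrak g\to\Lambda^2\mathfrak g$ satisfying co-Jacobi (in Sweedler notation $\delta(x)=x_1\wedge x_2$: $\delta(x_1)\wedge x_2-x_1\wedge\delta(x_2)=0$ in $\Lambda^3\mathfrak g$) and the 1-cocycle condition $\delta[x,y]=[\delta x,y]+[x,\delta y]$ for the adjoint action on $\Lambda^2\mathfrak g$. *)

theory Defs
  imports Main
begin

text \<open>The exterior powers are
identified with alternating tensors: an element of Lambda^2 is an alternating function
'i \<Rightarrow> 'i \<Rightarrow> 'k, with x \<and> y = x \<otimes> y - y \<otimes> x; an element of Lambda^3 is an alternating
function 'i \<Rightarrow> 'i \<Rightarrow> 'i \<Rightarrow> 'k (full antisymmetrisation).\<close>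

definition bas :: "'i \<Rightarrow> 'i \<Rightarrow> 'k::zero_neq_one" where
  "bas i = (\<lambda>j. if j = i then 1 else 0)"

definition alternating2 :: "('i \<Rightarrow> 'i \<Rightarrow> 'k::comm_ring) \<Rightarrow> bool" where
  "alternating2 w \<longleftrightarrow> (\<forall>i j. w i j = - w j i) \<and> (\<forall>i. w i i = 0)"

definition wedge2 :: "('i \<Rightarrow> 'k::comm_ring) \<Rightarrow> ('i \<Rightarrow> 'k) \<Rightarrow> ('i \<Rightarrow> 'i \<Rightarrow> 'k)" where
  "wedge2 x y = (\<lambda>i j. x i * y j - x j * y i)"

text \<open>wedge of an element of Lambda^2 with a vector, an element of Lambda^3
  (note x \<and> w = w \<and> x for w of degree 2)\<close>
definition wedge21 :: "('i \<Rightarrow> 'i \<Rightarrow> 'k::comm_ring) \<Rightarrow> ('i \<Rightarrow> 'k) \<Rightarrow> ('i \<Rightarrow> 'i \<Rightarrow> 'i \<Rightarrow> 'k)" where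
  "wedge21 w x = (\<lambda>i j k. w i j * x k + w j k * x i + w k i * x j)"

text \<open>Adjoint action of x on Lambda^2 g: x.(u \<and> v) = [x,u] \<and> v + u \<and> [x,v]\<close>
definition act2 :: "(('i::finite \<Rightarrow> 'k::comm_ring_1) \<Rightarrow> ('i \<Rightarrow> 'k) \<Rightarrow> ('i \<Rightarrow> 'k))
    \<Rightarrow> ('i \<Rightarrow> 'k) \<Rightarrow> ('i \<Rightarrow> 'i \<Rightarrow> 'k) \<Rightarrow> ('i \<Rightarrow> 'i \<Rightarrow> 'k)" where
  "act2 br x w = (\<lambda>k l. (\<Sum>i\<in>UNIV. br x (bas i) k * w i l) + (\<Sum>j\<in>UNIV. br x (bas j) l * w k j))"

definition linear_cobracket :: "(('i \<Rightarrow> 'k::comm_ring) \<Rightarrow> ('i \<Rightarrow> 'i \<Rightarrow> 'k)) \<Rightarrow> bool" where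
  "linear_cobracket d \<longleftrightarrow> (\<forall>x y. d (\<lambda>i. x i + y i) = (\<lambda>k l. d x k l + d y k l)) \<and>
      (\<forall>c x. d (\<lambda>i. c * x i) = (\<lambda>k l. c * d x k l))"

text \<open>co-Jacobi: writing d(x) = sum_{i<j} d(x)_{ij} b_i \<and> b_j, the Sweedler expression
  d(x_1) \<and> x_2 - x_1 \<and> d(x_2) equals (1/2) of the double sum below (it is symmetric
  in i,j); so its vanishing is equivalent.\<close>
definition cojacobi :: "(('i::finite \<Rightarrow> 'k::comm_ring_1) \<Rightarrow> ('i \<Rightarrow> 'i \<Rightarrow> 'k)) \<Rightarrow> bool" where
  "cojacobi d \<longleftrightarrow> (\<forall>x. (\<lambda>p q r. \<Sum>i\<in>UNIV. \<Sum>j\<in>UNIV.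
       d x i j * (wedge21 (d (bas i)) (bas j) p q r - wedge21 (d (bas j)) (bas i) p q r))
     = (\<lambda>p q r. 0))"

definition cocycle :: "(('i::finite \<Rightarrow> 'k::comm_ring_1) \<Rightarrow> ('i \<Rightarrow> 'k) \<Rightarrow> ('i \<Rightarrow> 'k))
    \<Rightarrow> (('i \<Rightarrow> 'k) \<Rightarrow> ('i \<Rightarrow> 'i \<Rightarrow> 'k)) \<Rightarrow> bool" where
  "cocycle br d \<longleftrightarrow> (\<forall>x y. d (br x y) = (\<lambda>k l. act2 br x (d y) k l - act2 br y (d x) k l))"

definition lie_bialgebra_structure :: "(('i::finite \<Rightarrow> 'k::comm_ring_1) \<Rightarrow> ('i \<Rightarrow> 'k) \<Rightarrow> ('i \<Rightarrow> 'k))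
    \<Rightarrow> (('i \<Rightarrow> 'k) \<Rightarrow> ('i \<Rightarrow> 'i \<Rightarrow> 'k)) \<Rightarrow> bool" where
  "lie_bialgebra_structure br d \<longleftrightarrow>
     linear_cobracket d \<and> (\<forall>x. alternating2 (d x)) \<and> cojacobi d \<and> cocycle br d"

datatype f3idx = E1 | E2 | E3 | Al | Be | Ga

lemma UNIV_f3idx: "(UNIV :: f3idx set) = {E1, E2, E3, Al, Be, Ga}"
  using f3idx.exhaust by auto

instance f3idx :: finite
  by standard (simp add: UNIV_f3idx)

definition br_f3 :: "(f3idx \<Rightarrow> 'k::comm_ring) \<Rightarrow> (f3idx \<Rightarrow> 'k) \<Rightarrow> (f3idx \<Rightarrow> 'k)" where
  "br_f3 x y = (\<lambda>k. case k of
      Al \<Rightarrow> x E1 * y E2 - x E2 * y E1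
    | Be \<Rightarrow> x E2 * y E3 - x E3 * y E2
    | Ga \<Rightarrow> x E3 * y E1 - x E1 * y E3
    | _ \<Rightarrow> 0)"

definition in_z :: "(f3idx \<Rightarrow> 'k::zero) \<Rightarrow> bool" where
  "in_z A \<longleftrightarrow> A E1 = 0 \<and> A E2 = 0 \<and> A E3 = 0"

definition in_L2z :: "(f3idx \<Rightarrow> f3idx \<Rightarrow> 'k::comm_ring) \<Rightarrow> bool" where
  "in_L2z w \<longleftrightarrow> alternating2 w \<and> (\<forall>i j. i \<in> {E1, E2, E3} \<longrightarrow> w i j = 0)"

definition delta_f3 :: "(f3idx \<Rightarrow> 'k::comm_ring_1) \<Rightarrow> (f3idx \<Rightarrow> 'k) \<Rightarrow> (f3idx \<Rightarrow> 'k)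
    \<Rightarrow> (f3idx \<Rightarrow> f3idx \<Rightarrow> 'k) \<Rightarrow> (f3idx \<Rightarrow> f3idx \<Rightarrow> 'k) \<Rightarrow> (f3idx \<Rightarrow> f3idx \<Rightarrow> 'k)
    \<Rightarrow> (f3idx \<Rightarrow> 'k) \<Rightarrow> (f3idx \<Rightarrow> f3idx \<Rightarrow> 'k)" where
  "delta_f3 A1 A2 A3 w1 w2 w3 x = (\<lambda>k l.
       x E1 * (wedge2 (bas E1) A1 k l + w1 k l)
     + x E2 * (wedge2 (bas E2) A2 k l + w2 k l)
     + x E3 * (wedge2 (bas E3) A3 k l + w3 k l))"

end

theory Submission
  imports Defs
begin


lemma all_f3: "(\<forall>p::f3idx. P p) \<longleftrightarrow> P E1 \<and> P E2 \<and> P E3 \<and> P Al \<and> P Be \<and> P Ga"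
  by (metis f3idx.exhaust)

lemma sum_f3: "(\<Sum>i\<in>UNIV. f i) = f E1 + f E2 + f E3 + f Al + f Be + f Ga"
  by (simp add: UNIV_f3idx algebra_simps)

definition zv :: "'k \<Rightarrow> 'k \<Rightarrow> 'k \<Rightarrow> f3idx \<Rightarrow> 'k::zero" where
  "zv a b c = (\<lambda>i. case i of Al \<Rightarrow> a | Be \<Rightarrow> b | Ga \<Rightarrow> c | _ \<Rightarrow> 0)"

definition lz :: "'k \<Rightarrow> 'k \<Rightarrow> 'k \<Rightarrow> f3idx \<Rightarrow> f3idx \<Rightarrow> 'k::comm_ring" where
  "lz u v t = (\<lambda>i j. case i of
      Al \<Rightarrow> (case j of Be \<Rightarrow> u | Ga \<Rightarrow> -t | _ \<Rightarrow> 0)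
    | Be \<Rightarrow> (case j of Al \<Rightarrow> -u | Ga \<Rightarrow> v | _ \<Rightarrow> 0)
    | Ga \<Rightarrow> (case j of Al \<Rightarrow> t | Be \<Rightarrow> -v | _ \<Rightarrow> 0)
    | _ \<Rightarrow> 0)"

lemma zv_rep: "in_z A \<Longrightarrow> A = zv (A Al) (A Be) (A Ga)"
  unfolding in_z_def zv_def fun_eq_iff by (simp add: all_f3)

lemma lz_rep: "in_L2z w \<Longrightarrow> w = lz (w Al Be) (w Be Ga) (w Ga Al)"
proof -
  assume a: "in_L2z w"
  have as: "w i j = - w j i" for i j using a unfolding in_L2z_def alternating2_def by blast
  have d: "w i i = 0" for i using a unfolding in_L2z_def alternating2_def by blast
  have e: "i \<in> {E1,E2,E3} \<Longrightarrow> w i j = 0" for i j using a unfolding in_L2z_def by blast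
  have e': "j \<in> {E1,E2,E3} \<Longrightarrow> w i j = 0" for i j using e[of j i] as[of i j] by simp
  show ?thesis unfolding lz_def fun_eq_iff
    apply (simp only: all_f3)
    apply (simp add: e e' d)
    using as[of Be Al] as[of Ga Be] as[of Al Ga] by simp
qed

lemma wedge21_lin: fixes c :: "f3idx \<Rightarrow> 'k::comm_ring_1" shows "(\<Sum>j\<in>UNIV. c j * wedge21 w (bas j) p q r) = wedge21 w c p q r"
proof -
  have d: "(\<Sum>j\<in>UNIV. c j * (if r = j then 1 else 0)) = c r" for r :: f3idx
    by (simp add: if_distrib cong: if_cong)
  show ?thesis unfolding wedge21_def bas_def
    by (simp add: distrib_left sum.distrib mult.left_commute[of "c _"] sum_distrib_left[symmetric] d)
qed

lemma wedge21_self: "wedge21 (\<lambda>i j. wedge2 u A i j + w i j) (\<lambda>j. c * A j) p q r = c * wedge21 w A p q r"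
  unfolding wedge21_def wedge2_def by (simp add: algebra_simps)

definition adl :: "(f3idx \<Rightarrow> 'k::comm_ring) \<Rightarrow> (f3idx \<Rightarrow> 'k) \<Rightarrow> f3idx \<Rightarrow> 'k" where
  "adl x v k = (case k of Al \<Rightarrow> x E1 * v E2 - x E2 * v E1 | Be \<Rightarrow> x E2 * v E3 - x E3 * v E2
     | Ga \<Rightarrow> x E3 * v E1 - x E1 * v E3 | _ \<Rightarrow> 0)"

lemma act2_f3: "act2 br_f3 x w k l = adl x (\<lambda>i. w i l) k + adl x (\<lambda>j. w k j) l"
  unfolding act2_def adl_def br_f3_def sum_f3 bas_def by (cases k; cases l; simp)

context
  fixes A1 A2 A3 :: "f3idx \<Rightarrow> 'k::field_char_0"
    and w1 w2 w3 :: "f3idx \<Rightarrow> f3idx \<Rightarrow> 'k"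
  assumes z: "in_z A1" "in_z A2" "in_z A3"
    and L: "in_L2z w1" "in_L2z w2" "in_L2z w3"
begin

abbreviation "D \<equiv> delta_f3 A1 A2 A3 w1 w2 w3"

lemma Dz: "D (bas Al) = (\<lambda>i j. 0)" "D (bas Be) = (\<lambda>i j. 0)" "D (bas Ga) = (\<lambda>i j. 0)"
  unfolding delta_f3_def by (simp_all add: bas_def)

lemma wE: "w1 E1 j = 0" "w1 E2 j = 0" "w1 E3 j = 0" "w2 E1 j = 0" "w2 E2 j = 0" "w2 E3 j = 0"
   "w3 E1 j = 0" "w3 E2 j = 0" "w3 E3 j = 0"
  using L unfolding in_L2z_def by auto

lemma wE': "w1 j E1 = 0" "w1 j E2 = 0" "w1 j E3 = 0" "w2 j E1 = 0" "w2 j E2 = 0" "w2 j E3 = 0"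
   "w3 j E1 = 0" "w3 j E2 = 0" "w3 j E3 = 0"
proof -
  have as: "w i j = - w j i" if "in_L2z w" for w :: "f3idx \<Rightarrow> f3idx \<Rightarrow> 'k" and i j
    using that unfolding in_L2z_def alternating2_def by blast+
  show "w1 j E1 = 0" "w1 j E2 = 0" "w1 j E3 = 0" "w2 j E1 = 0" "w2 j E2 = 0" "w2 j E3 = 0"
   "w3 j E1 = 0" "w3 j E2 = 0" "w3 j E3 = 0"
    by (subst as, rule L, simp add: wE)+
qed

lemma AE: "A1 E1 = 0" "A1 E2 = 0" "A1 E3 = 0" "A2 E1 = 0" "A2 E2 = 0" "A2 E3 = 0"
   "A3 E1 = 0" "A3 E2 = 0" "A3 E3 = 0"
  using z unfolding in_z_def by auto

lemma Drow: "D y E1 l = y E1 * A1 l" "D y E2 l = y E2 * A2 l" "D y E3 l = y E3 * A3 l"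
  unfolding delta_f3_def wedge2_def bas_def by (simp_all add: wE AE)

lemma Dcol: "D y l E1 = - y E1 * A1 l" "D y l E2 = - y E2 * A2 l" "D y l E3 = - y E3 * A3 l"
  unfolding delta_f3_def wedge2_def bas_def by (simp_all add: wE' AE)

lemma D_alt: "alternating2 (D x)"
proof -
  have as: "w i j = - w j i" "w i i = 0" if "in_L2z w" for w :: "f3idx \<Rightarrow> f3idx \<Rightarrow> 'k" and i j
    using that unfolding in_L2z_def alternating2_def by blast+
  show ?thesis unfolding alternating2_def delta_f3_def wedge2_def
  proof (intro conjI allI)
    fix i j
    show "x E1 * ((bas E1 i * A1 j - bas E1 j * A1 i) + w1 i j) +
          x E2 * ((bas E2 i * A2 j - bas E2 j * A2 i) + w2 i j) +
          x E3 * ((bas E3 i * A3 j - bas E3 j * A3 i) + w3 i j) =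
        - (x E1 * ((bas E1 j * A1 i - bas E1 i * A1 j) + w1 j i) +
          x E2 * ((bas E2 j * A2 i - bas E2 i * A2 j) + w2 j i) +
          x E3 * ((bas E3 j * A3 i - bas E3 i * A3 j) + w3 j i))"
      using as(1)[OF L(1), of i j] as(1)[OF L(2), of i j] as(1)[OF L(3), of i j] by (simp add: algebra_simps)
    show "x E1 * ((bas E1 i * A1 i - bas E1 i * A1 i) + w1 i i) +
          x E2 * ((bas E2 i * A2 i - bas E2 i * A2 i) + w2 i i) +
          x E3 * ((bas E3 i * A3 i - bas E3 i * A3 i) + w3 i i) = 0"
      using as(2)[OF L(1), of i] as(2)[OF L(2), of i] as(2)[OF L(3), of i] by simp
  qed
qed

lemma D_lin: "linear_cobracket D"
  unfolding linear_cobracket_def delta_f3_def by (simp add: fun_eq_iff algebra_simps)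

lemma Dbr: "D (br_f3 x y) = (\<lambda>k l. 0)"
  unfolding delta_f3_def br_f3_def by (simp add: fun_eq_iff)

lemma S_eq: "(\<Sum>i\<in>UNIV. \<Sum>j\<in>UNIV.
       D x i j * (wedge21 (D (bas i)) (bas j) p q r - wedge21 (D (bas j)) (bas i) p q r))
   = 2 * (x E1 * wedge21 w1 A1 p q r + x E2 * wedge21 w2 A2 p q r + x E3 * wedge21 w3 A3 p q r)"
proof -
  let ?W = "\<lambda>i j. wedge21 (D (bas i)) (bas j) p q r"
  have alt: "D x i j = - D x j i" for i j using D_alt unfolding alternating2_def by blast
  have "(\<Sum>i\<in>UNIV. \<Sum>j\<in>UNIV. D x i j * (?W i j - ?W j i))
      = (\<Sum>i\<in>UNIV. \<Sum>j\<in>UNIV. D x i j * ?W i j) - (\<Sum>i\<in>UNIV. \<Sum>j\<in>UNIV. D x i j * ?W j i)"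
    by (simp add: right_diff_distrib sum_subtractf)
  also have "(\<Sum>i\<in>UNIV. \<Sum>j\<in>UNIV. D x i j * ?W j i) = - (\<Sum>i\<in>UNIV. \<Sum>j\<in>UNIV. D x i j * ?W i j)"
  proof -
    have e: "D x i j * ?W j i = - (D x j i * ?W j i)" for i j using alt[of i j] by simp
    have "(\<Sum>i\<in>UNIV. \<Sum>j\<in>UNIV. D x i j * ?W j i) = - (\<Sum>i\<in>UNIV. \<Sum>j\<in>UNIV. D x j i * ?W j i)"
      unfolding e sum_negf by simp
    also have "(\<Sum>i\<in>UNIV. \<Sum>j\<in>UNIV. D x j i * ?W j i) = (\<Sum>i\<in>UNIV. \<Sum>j\<in>UNIV. D x i j * ?W i j)"
      by (rule sum.swap)
    finally show ?thesis .
  qed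
  finally have 1: "(\<Sum>i\<in>UNIV. \<Sum>j\<in>UNIV. D x i j * (?W i j - ?W j i)) = 2 * (\<Sum>i\<in>UNIV. \<Sum>j\<in>UNIV. D x i j * ?W i j)"
    by simp
  have r: "(\<Sum>j\<in>UNIV. D x i j * ?W i j) = wedge21 (D (bas i)) (\<lambda>j. D x i j) p q r" for i
    using wedge21_lin[of "\<lambda>j. D x i j" "D (bas i)" p q r] by (simp add: mult.commute)
  have 2: "(\<Sum>i\<in>UNIV. \<Sum>j\<in>UNIV. D x i j * ?W i j) = x E1 * wedge21 w1 A1 p q r + x E2 * wedge21 w2 A2 p q r + x E3 * wedge21 w3 A3 p q r"
  proof -
    have rr: "(\<lambda>j. D x E1 j) = (\<lambda>j. x E1 * A1 j)" "(\<lambda>j. D x E2 j) = (\<lambda>j. x E2 * A2 j)"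
      "(\<lambda>j. D x E3 j) = (\<lambda>j. x E3 * A3 j)" by (simp_all add: Drow)
    have DE: "D (bas E1) = (\<lambda>k l. wedge2 (bas E1) A1 k l + w1 k l)"
      "D (bas E2) = (\<lambda>k l. wedge2 (bas E2) A2 k l + w2 k l)"
      "D (bas E3) = (\<lambda>k l. wedge2 (bas E3) A3 k l + w3 k l)"
      by (simp_all add: delta_f3_def fun_eq_iff bas_def)
    have z0: "wedge21 (\<lambda>i j. 0) v p q r = 0" for v :: "f3idx \<Rightarrow> 'k" by (simp add: wedge21_def)
    show ?thesis unfolding r sum_f3 Dz z0 rr DE wedge21_self by simp
  qed
  show ?thesis using 1 2 by simp
qed

lemma cojac_iff: "cojacobi D \<longleftrightarrow>
   wedge21 w1 A1 = (\<lambda>p q r. 0) \<and> wedge21 w2 A2 = (\<lambda>p q r. 0) \<and> wedge21 w3 A3 = (\<lambda>p q r. 0)"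
proof
  assume c: "cojacobi D"
  have h: "2 * (x E1 * wedge21 w1 A1 p q r + x E2 * wedge21 w2 A2 p q r + x E3 * wedge21 w3 A3 p q r) = 0" for x p q r
    using c unfolding cojacobi_def fun_eq_iff S_eq by blast
  show "wedge21 w1 A1 = (\<lambda>p q r. 0) \<and> wedge21 w2 A2 = (\<lambda>p q r. 0) \<and> wedge21 w3 A3 = (\<lambda>p q r. 0)"
    using h[of "bas E1"] h[of "bas E2"] h[of "bas E3"] by (simp add: fun_eq_iff bas_def)
next
  assume "wedge21 w1 A1 = (\<lambda>p q r. 0) \<and> wedge21 w2 A2 = (\<lambda>p q r. 0) \<and> wedge21 w3 A3 = (\<lambda>p q r. 0)"
  then show "cojacobi D" unfolding cojacobi_def fun_eq_iff S_eq by simp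
qed

lemma cocyc_iff: "cocycle br_f3 D \<longleftrightarrow>
   (A1 Be + A2 Be = 0 \<and> A1 Ga + A2 Ga = 0 \<and> A2 Al + A3 Al = 0 \<and> A2 Ga + A3 Ga = 0 \<and>
    A3 Al + A1 Al = 0 \<and> A3 Be + A1 Be = 0)"
proof
  assume c: "cocycle br_f3 D"
  have h: "act2 br_f3 x (D y) k l - act2 br_f3 y (D x) k l = 0" for x y k l
    using c unfolding cocycle_def Dbr fun_eq_iff by metis
  have h2: "adl x (\<lambda>i. D y i l) k + adl x (\<lambda>j. D y k j) l - (adl y (\<lambda>i. D x i l) k + adl y (\<lambda>j. D x k j) l) = 0" for x y k l
    using h[of x y k l] unfolding act2_f3 .
  show "A1 Be + A2 Be = 0 \<and> A1 Ga + A2 Ga = 0 \<and> A2 Al + A3 Al = 0 \<and> A2 Ga + A3 Ga = 0 \<and>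
    A3 Al + A1 Al = 0 \<and> A3 Be + A1 Be = 0"
    using h2[of "bas E1" "bas E2" Al Be] h2[of "bas E1" "bas E2" Al Ga]
      h2[of "bas E2" "bas E3" Be Al] h2[of "bas E2" "bas E3" Be Ga]
      h2[of "bas E3" "bas E1" Ga Al] h2[of "bas E3" "bas E1" Ga Be]
    apply (simp add: adl_def Drow Dcol bas_def AE algebra_simps)
    by (simp add: neg_eq_iff_add_eq_0 add.commute)
next
  assume e: "A1 Be + A2 Be = 0 \<and> A1 Ga + A2 Ga = 0 \<and> A2 Al + A3 Al = 0 \<and> A2 Ga + A3 Ga = 0 \<and>
    A3 Al + A1 Al = 0 \<and> A3 Be + A1 Be = 0"
  then have s: "A2 Be = - A1 Be" "A2 Ga = - A1 Ga" "A3 Al = - A1 Al" "A2 Al = A1 Al" "A3 Be = - A1 Be"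
    "A3 Ga = A1 Ga" by (simp_all add: eq_neg_iff_add_eq_0 add.commute) (metis add.commute add_right_cancel)+
  show "cocycle br_f3 D" unfolding cocycle_def Dbr fun_eq_iff act2_f3
  proof (intro allI)
    fix x y :: "f3idx \<Rightarrow> 'k" and k l
    show "0 = adl x (\<lambda>i. D y i l) k + adl x (\<lambda>j. D y k j) l - (adl y (\<lambda>i. D x i l) k + adl y (\<lambda>j. D x k j) l)"
      by (cases k; cases l; simp add: adl_def Drow Dcol AE s algebra_simps)
  qed
qed

lemma exABC: "(\<exists>a b c.
        A1 = (\<lambda>i. a * bas Al i + b * bas Be i + c * bas Ga i) \<and>
        A2 = (\<lambda>i. a * bas Al i - b * bas Be i - c * bas Ga i) \<and>
        A3 = (\<lambda>i. - a * bas Al i - b * bas Be i + c * bas Ga i)) \<longleftrightarrow>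
   (A1 Be + A2 Be = 0 \<and> A1 Ga + A2 Ga = 0 \<and> A2 Al + A3 Al = 0 \<and> A2 Ga + A3 Ga = 0 \<and>
    A3 Al + A1 Al = 0 \<and> A3 Be + A1 Be = 0)"
proof
  assume "\<exists>a b c.
        A1 = (\<lambda>i. a * bas Al i + b * bas Be i + c * bas Ga i) \<and>
        A2 = (\<lambda>i. a * bas Al i - b * bas Be i - c * bas Ga i) \<and>
        A3 = (\<lambda>i. - a * bas Al i - b * bas Be i + c * bas Ga i)"
  then show "A1 Be + A2 Be = 0 \<and> A1 Ga + A2 Ga = 0 \<and> A2 Al + A3 Al = 0 \<and> A2 Ga + A3 Ga = 0 \<and>
    A3 Al + A1 Al = 0 \<and> A3 Be + A1 Be = 0" by (auto simp: bas_def)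
next
  assume e: "A1 Be + A2 Be = 0 \<and> A1 Ga + A2 Ga = 0 \<and> A2 Al + A3 Al = 0 \<and> A2 Ga + A3 Ga = 0 \<and>
    A3 Al + A1 Al = 0 \<and> A3 Be + A1 Be = 0"
  then have s: "A2 Be = - A1 Be" "A2 Ga = - A1 Ga" "A3 Al = - A1 Al" "A2 Al = A1 Al" "A3 Be = - A1 Be"
    "A3 Ga = A1 Ga" by (simp_all add: eq_neg_iff_add_eq_0 add.commute) (metis add.commute add_right_cancel)+
  show "\<exists>a b c.
        A1 = (\<lambda>i. a * bas Al i + b * bas Be i + c * bas Ga i) \<and>
        A2 = (\<lambda>i. a * bas Al i - b * bas Be i - c * bas Ga i) \<and>
        A3 = (\<lambda>i. - a * bas Al i - b * bas Be i + c * bas Ga i)"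
    by (rule exI[of _ "A1 Al"], rule exI[of _ "A1 Be"], rule exI[of _ "A1 Ga"])
      (simp add: fun_eq_iff all_f3 bas_def AE s)
qed

lemma main: "lie_bialgebra_structure br_f3 D \<longleftrightarrow>
    ((\<exists>a b c.
        A1 = (\<lambda>i. a * bas Al i + b * bas Be i + c * bas Ga i) \<and>
        A2 = (\<lambda>i. a * bas Al i - b * bas Be i - c * bas Ga i) \<and>
        A3 = (\<lambda>i. - a * bas Al i - b * bas Be i + c * bas Ga i)) \<and>
     wedge21 w1 A1 = (\<lambda>p q r. 0) \<and> wedge21 w2 A2 = (\<lambda>p q r. 0) \<and>
     wedge21 w3 A3 = (\<lambda>p q r. 0))"
  unfolding lie_bialgebra_structure_def exABC cojac_iff cocyc_iff using D_lin D_alt by blast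

end

theorem mainTheorem18:
  fixes A1 A2 A3 :: "f3idx \<Rightarrow> 'k::field_char_0"
    and w1 w2 w3 :: "f3idx \<Rightarrow> f3idx \<Rightarrow> 'k"
  assumes "in_z A1" "in_z A2" "in_z A3"
    and "in_L2z w1" "in_L2z w2" "in_L2z w3"
  shows "lie_bialgebra_structure br_f3 (delta_f3 A1 A2 A3 w1 w2 w3) \<longleftrightarrow>
    ((\<exists>a b c.
        A1 = (\<lambda>i. a * bas Al i + b * bas Be i + c * bas Ga i) \<and>
        A2 = (\<lambda>i. a * bas Al i - b * bas Be i - c * bas Ga i) \<and>
        A3 = (\<lambda>i. - a * bas Al i - b * bas Be i + c * bas Ga i)) \<and>
     wedge21 w1 A1 = (\<lambda>p q r. 0) \<and> wedge21 w2 A2 = (\<lambda>p q r. 0) \<and>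
     wedge21 w3 A3 = (\<lambda>p q r. 0))"
    using main[OF assms] .

end
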